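(* Let $N\ge1$, $K\ge1$, $n_v\ge0$, $L\ge1$, let $\mathbf{T}\in[0,1]^{K\times K}$ be row-stochastic, and let $(X(0),X(1),\dots,X(L))$ be the probabilistic cellular automaton with local transition matrix $\mathbf{T}$ started from an arbitrary initial distribution. Define $\mathbf{A}_\infty=\frac{1}{LN}\sum_{t=1}^L\sum_{n=1}^N\mathbb{E}[\varphi_{n,t-1}^\top\varphi_{n,t-1}]\in\mathbb{R}^{K\times K}$ and, for $k\in[K]$, $\mathbf{b}_\infty(\cdot,k)=\frac{1}{LN}\sum_{t=1}^L\sum_{n=1}^N\mathbb{E}[\varphi_{n,t-1}^\top c_{n,t}(k)]\in\mathbb{R}^{K}$. If $\mathbf{A}_\infty$ is nonsingular, then $\mathbf{T}=\mathbf{A}_\infty^{-1}\mathbf{b}_\infty$.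
   Context: Vertices $[N]$ are arranged on a cycle; $V_n\subset[N]$ is the set of residues modulo $N$ of $n-n_v,\dots,n+n_v$. The chain $X(t)\in[K]^N$ evolves as follows: given $X(t)$, the coordinates $X_n(t+1)$ are conditionally independent with $\mathbb{P}(X_n(t+1)=k\mid X(t))=\varphi_{n,t}\mathbf{T}_{\cdot,k}$, where $\varphi_{n,t}\in\mathbb{R}^{1\times K}$ is the row vector $\varphi_{n,t}(j)=\frac{1}{|V_n|}\sum_{i\in V_n}\mathbf{1}\{X_i(t)=j\}$. Also $c_{n,t}(k)=\mathbf{1}\{X_n(t)=k\}$. $\mathbf{b}_\infty$ is the $K\times K$ matrix with columns $\mathbf{b}_\infty(\cdot,k)$. *)

theory Defs
  imports "HOL-Analysis.Analysis" "HOL-Probability.Probability"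
begin

text \<open>Vertices are 0..N-1 on a cycle (paper's 1..N, shifted). States are the finite type 'k,
  so K = CARD('k). Configurations are functions nat => 'k; only the values on {..<N} matter.\<close>

definition nbhd :: "nat \<Rightarrow> nat \<Rightarrow> nat \<Rightarrow> nat set" where
  "nbhd N nv n = {nat ((int n + d) mod int N) | d. - int nv \<le> d \<and> d \<le> int nv}"

definition phi :: "nat \<Rightarrow> nat \<Rightarrow> (nat \<Rightarrow> 'k) \<Rightarrow> nat \<Rightarrow> 'k \<Rightarrow> real" where
  "phi N nv x n j = real (card {i \<in> nbhd N nv n. x i = j}) / real (card (nbhd N nv n))"

definition cind :: "(nat \<Rightarrow> 'k) \<Rightarrow> nat \<Rightarrow> 'k \<Rightarrow> real" where
  "cind x n k = (if x n = k then 1 else 0)"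

definition row_stochastic :: "real^'k^'k \<Rightarrow> bool" where
  "row_stochastic T \<longleftrightarrow> (\<forall>i j. 0 \<le> T$i$j \<and> T$i$j \<le> 1) \<and> (\<forall>i. (\<Sum>j\<in>UNIV. T$i$j) = 1)"

definition local_law :: "nat \<Rightarrow> nat \<Rightarrow> real^'k^'k \<Rightarrow> (nat \<Rightarrow> 'k) \<Rightarrow> nat \<Rightarrow> ('k::finite) pmf" where
  "local_law N nv T x n = embed_pmf (\<lambda>k. \<Sum>j\<in>UNIV. phi N nv x n j * T$j$k)"

definition pca_step :: "nat \<Rightarrow> nat \<Rightarrow> real^'k^'k \<Rightarrow> (nat \<Rightarrow> 'k) \<Rightarrow> (nat \<Rightarrow> ('k::finite)) pmf" where
  "pca_step N nv T x = Pi_pmf {..<N} undefined (local_law N nv T x)"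

fun pca_dist :: "nat \<Rightarrow> nat \<Rightarrow> real^'k^'k \<Rightarrow> (nat \<Rightarrow> 'k) pmf \<Rightarrow> nat \<Rightarrow> (nat \<Rightarrow> ('k::finite)) pmf" where
  "pca_dist N nv T mu0 0 = mu0"
| "pca_dist N nv T mu0 (Suc t) = bind_pmf (pca_dist N nv T mu0 t) (pca_step N nv T)"

definition pca_pair :: "nat \<Rightarrow> nat \<Rightarrow> real^'k^'k \<Rightarrow> (nat \<Rightarrow> 'k) pmf \<Rightarrow> nat \<Rightarrow> ((nat \<Rightarrow> 'k) \<times> (nat \<Rightarrow> ('k::finite))) pmf" where
  "pca_pair N nv T mu0 t = bind_pmf (pca_dist N nv T mu0 t) (\<lambda>x. map_pmf (\<lambda>y. (x, y)) (pca_step N nv T x))"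

definition A_inf :: "nat \<Rightarrow> nat \<Rightarrow> nat \<Rightarrow> real^'k^'k \<Rightarrow> (nat \<Rightarrow> 'k) pmf \<Rightarrow> real^('k::finite)^'k" where
  "A_inf N nv L T mu0 = (\<chi> i j. (1 / (real L * real N)) *
     (\<Sum>t\<in>{1..L}. \<Sum>n<N. measure_pmf.expectation (pca_dist N nv T mu0 (t - 1))
        (\<lambda>x. phi N nv x n i * phi N nv x n j)))"

definition b_inf :: "nat \<Rightarrow> nat \<Rightarrow> nat \<Rightarrow> real^'k^'k \<Rightarrow> (nat \<Rightarrow> 'k) pmf \<Rightarrow> real^('k::finite)^'k" where
  "b_inf N nv L T mu0 = (\<chi> i k. (1 / (real L * real N)) *
     (\<Sum>t\<in>{1..L}. \<Sum>n<N. measure_pmf.expectation (pca_pair N nv T mu0 (t - 1))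
        (\<lambda>(x, y). phi N nv x n i * cind y n k)))"

end

theory Submission
  imports Defs
begin

lemma nbhd_fin: "finite (nbhd N nv n)"
proof -
  have "nbhd N nv n = (\<lambda>d. nat ((int n + d) mod int N)) ` {- int nv..int nv}"
    unfolding nbhd_def by auto
  thus ?thesis by simp
qed

lemma nbhd_mem: "n < N \<Longrightarrow> n \<in> nbhd N nv n"
  unfolding nbhd_def by (rule CollectI, rule exI[of _ 0]) auto

lemma nbhd_card: "n < N \<Longrightarrow> card (nbhd N nv n) > 0"
  using nbhd_fin nbhd_mem card_gt_0_iff by blast

lemma phi_nonneg: "0 \<le> phi N nv x n j"
  unfolding phi_def by simp

lemma phi_le1: "phi N nv x n j \<le> 1"
proof -
  have "card {i \<in> nbhd N nv n. x i = j} \<le> card (nbhd N nv n)"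
    using nbhd_fin by (intro card_mono) auto
  thus ?thesis unfolding phi_def
    by (cases "card (nbhd N nv n) = 0") (auto simp: divide_le_eq_1)
qed

lemma phi_sum: "n < N \<Longrightarrow> (\<Sum>j\<in>(UNIV::'k::finite set). phi N nv x n j) = 1"
proof -
  assume n: "n < N"
  let ?S = "nbhd N nv n"
  have "(\<Sum>j\<in>(UNIV::'k set). real (card {i \<in> ?S. x i = j})) = real (card ?S)"
  proof -
    have "card ?S = (\<Sum>j\<in>(UNIV::'k set). card {i \<in> ?S. x i = j})"
      using sum.group[of ?S UNIV x "\<lambda>_. 1::nat", OF nbhd_fin] by simp
    thus ?thesis by (metis of_nat_sum)
  qed
  thus ?thesis using nbhd_card[OF n] unfolding phi_def
    by (simp add: sum_divide_distrib[symmetric])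
qed

lemma pmf_local_law: "n < N \<Longrightarrow> pmf (local_law N nv T x n) k = (\<Sum>j\<in>UNIV. phi N nv x n j * T$j$k)"
  if "row_stochastic T" for T :: "real^'k::finite^'k"
proof -
  assume n: "n < N"
  have nn: "\<And>k. 0 \<le> (\<Sum>j\<in>UNIV. phi N nv x n j * T$j$k)"
    using that unfolding row_stochastic_def by (intro sum_nonneg mult_nonneg_nonneg phi_nonneg) auto
  have "(\<Sum>k\<in>UNIV. \<Sum>j\<in>UNIV. phi N nv x n j * T$j$k) = (\<Sum>j\<in>UNIV. phi N nv x n j * (\<Sum>k\<in>UNIV. T$j$k))"
    by (subst sum.swap) (simp add: sum_distrib_left)
  also have "\<dots> = 1" using that phi_sum[OF n] unfolding row_stochastic_def by simp
  finally have s: "(\<Sum>k\<in>UNIV. \<Sum>j\<in>UNIV. phi N nv x n j * T$j$k) = 1" .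
  have "(\<integral>\<^sup>+k. ennreal (\<Sum>j\<in>UNIV. phi N nv x n j * T$j$k) \<partial>count_space UNIV) = 1"
    by (simp add: nn_integral_count_space_finite s[symmetric] nn sum_nonneg)
  thus ?thesis unfolding local_law_def by (subst pmf_embed_pmf) (auto simp: nn)
qed

lemma expectation_bind_bounded:
  fixes f :: "'b \<Rightarrow> real"
  assumes "\<And>y. \<bar>f y\<bar> \<le> B"
  shows "measure_pmf.expectation (bind_pmf p q) f = measure_pmf.expectation p (\<lambda>x. measure_pmf.expectation (q x) f)"
  unfolding measure_pmf_bind
  by (rule integral_bind[where K="count_space UNIV" and B=B and B'=1])
     (auto simp: assms measurable_measure_pmf measure_pmf.finite_measure_axioms measure_pmf_in_subprob_algebra
        intro!: measurable_measure_pmf measure_pmf.emeasure_le_1 AE_I2)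


lemma expect_cind_step:
  fixes T :: "real^'k::finite^'k"
  assumes "row_stochastic T" "n < N"
  shows "measure_pmf.expectation (pca_step N nv T x) (\<lambda>y. cind y n k) = (\<Sum>j\<in>UNIV. phi N nv x n j * T$j$k)"
proof -
  have "measure_pmf.expectation (pca_step N nv T x) (\<lambda>y. cind y n k)
      = measure_pmf.expectation (map_pmf (\<lambda>y. y n) (pca_step N nv T x)) (\<lambda>v. indicator {k} v)"
    by (simp add: cind_def indicator_def of_bool_def)
  also have "map_pmf (\<lambda>y. y n) (pca_step N nv T x) = local_law N nv T x n"
    unfolding pca_step_def using assms by (subst Pi_pmf_component) auto
  also have "measure_pmf.expectation (local_law N nv T x n) (\<lambda>v. indicator {k} v) = pmf (local_law N nv T x n) k"
    by (simp add: measure_pmf_single)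
  finally show ?thesis using pmf_local_law[OF assms(1) assms(2)] by simp
qed

lemma expect_pair:
  fixes T :: "real^'k::finite^'k"
  assumes "row_stochastic T" "n < N"
  shows "measure_pmf.expectation (pca_pair N nv T mu0 t) (\<lambda>(x, y). phi N nv x n i * cind y n k)
    = (\<Sum>j\<in>UNIV. measure_pmf.expectation (pca_dist N nv T mu0 t) (\<lambda>x. phi N nv x n i * phi N nv x n j) * T$j$k)"
proof -
  have b: "\<bar>(\<lambda>(x, y). phi N nv x n i * cind y n k) z\<bar> \<le> 1" for z
    using phi_nonneg[of N nv "fst z" n i] phi_le1[of N nv "fst z" n i]
    by (cases z) (auto simp: cind_def)
  have "measure_pmf.expectation (pca_pair N nv T mu0 t) (\<lambda>(x, y). phi N nv x n i * cind y n k)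
     = measure_pmf.expectation (pca_dist N nv T mu0 t) (\<lambda>x. phi N nv x n i * (\<Sum>j\<in>UNIV. phi N nv x n j * T$j$k))"
    unfolding pca_pair_def
    by (subst expectation_bind_bounded[OF b]) (simp add: expect_cind_step[OF assms])
  also have "\<dots> = measure_pmf.expectation (pca_dist N nv T mu0 t) (\<lambda>x. \<Sum>j\<in>UNIV. phi N nv x n i * phi N nv x n j * T$j$k)"
    by (simp add: sum_distrib_left mult.assoc)
  also have "\<dots> = (\<Sum>j\<in>UNIV. measure_pmf.expectation (pca_dist N nv T mu0 t) (\<lambda>x. phi N nv x n i * phi N nv x n j * T$j$k))"
  proof (rule Bochner_Integration.integral_sum)
    fix j :: 'k
    show "integrable (measure_pmf (pca_dist N nv T mu0 t)) (\<lambda>x. phi N nv x n i * phi N nv x n j * T$j$k)"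
      by (intro measure_pmf.integrable_const_bound[where B="\<bar>T$j$k\<bar>"] AE_I2)
         (auto simp: abs_mult phi_nonneg phi_le1 intro!: mult_le_one mult_left_le_one_le mult_le_cancel_right1[THEN iffD2])
  qed
  also have "\<dots> = (\<Sum>j\<in>UNIV. measure_pmf.expectation (pca_dist N nv T mu0 t) (\<lambda>x. phi N nv x n i * phi N nv x n j) * T$j$k)"
    by simp
  finally show ?thesis .
qed


lemma b_eq:
  fixes T :: "real^'k::finite^'k"
  assumes "row_stochastic T"
  shows "b_inf N nv L T mu0 = A_inf N nv L T mu0 ** T"
proof -
  have "b_inf N nv L T mu0 $ i $ k = (A_inf N nv L T mu0 ** T) $ i $ k" for i k
  proof -
    have "(A_inf N nv L T mu0 ** T) $ i $ k = (\<Sum>j\<in>UNIV. (1 / (real L * real N)) *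
     (\<Sum>t\<in>{1..L}. \<Sum>n<N. measure_pmf.expectation (pca_dist N nv T mu0 (t - 1))
        (\<lambda>x. phi N nv x n i * phi N nv x n j)) * T$j$k)"
      by (simp add: matrix_matrix_mult_def A_inf_def)
    also have "\<dots> = (1 / (real L * real N)) * (\<Sum>t\<in>{1..L}. \<Sum>n<N. \<Sum>j\<in>UNIV. measure_pmf.expectation (pca_dist N nv T mu0 (t - 1))
        (\<lambda>x. phi N nv x n i * phi N nv x n j) * T$j$k)"
      by (simp add: sum_distrib_left sum_distrib_right mult.assoc sum.swap[of _ UNIV])
    also have "\<dots> = b_inf N nv L T mu0 $ i $ k"
      unfolding b_inf_def using expect_pair[OF assms] by simp
    finally show ?thesis by simp
  qed
  thus ?thesis by (simp add: vec_eq_iff)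
qed

theorem lemma4p3:
  fixes T :: "real^'k::finite^'k" and mu0 :: "(nat \<Rightarrow> 'k) pmf"
    and N nv L :: nat
  assumes "N \<ge> 1" and "L \<ge> 1" and "row_stochastic T"
    and "invertible (A_inf N nv L T mu0)"
  shows "T = matrix_inv (A_inf N nv L T mu0) ** b_inf N nv L T mu0"
proof -
  have "matrix_inv (A_inf N nv L T mu0) ** A_inf N nv L T mu0 = mat 1"
    using assms(4) unfolding invertible_def matrix_inv_def by (rule someI_ex[THEN conjunct2])
  then have "matrix_inv (A_inf N nv L T mu0) ** b_inf N nv L T mu0 = T"
    by (simp add: b_eq[OF assms(3)] matrix_mul_assoc del: matrix_mul_assoc[symmetric])
  thus ?thesis by simp
qed

end
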